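(* Let $d\ge1$, $m=2^d$, $r\ge2$, $t=\lceil\log_2 r\rceil$, let $p$ be a prime with $p>d$, let $c\in\{0,\dots,r-1\}^m$, $\ell\in\{0,\dots,r-1\}$, and let $\mathrm{Ind}\in\{0,1\}^m$ with $\mathrm{Ind}(i)=1$ iff $c(i)=\ell$. Let $i^*=\min\{i\in[m]:c(i)=\ell\}$ (or $0$ if none). If $i^*=0$ then $\mathrm{SPiRiT}_p(\mathrm{Ind})=0^d$. If $i^*\ge 1$ and $p$ is $A$-correct for $A=\{(T\,\mathrm{Ind})(k):k\in\mathrm{Anc}(i^* )\}$, then $\mathrm{SPiRiT}_p(\mathrm{Ind})$ is the binary representation of $i^*-1$. Moreover, writing each entry of $c$ and $\ell$ by its $t$-bit binary representation, each coordinate of $\mathrm{SPiRiT}_p(\mathrm{Ind})$ is a polynomial over $\mathbb Z_p$ in these $(m+1)t$ bits of degree at most $2t(p-1)^2$.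
   Context: Let $m=2^d$. Consider the complete binary tree with nodes indexed $1,\dots,2m-1$: node $1$ is the root, node $k\in[m-1]$ has left child $2k$ and right child $2k+1$; leaf number $i\in[m]$ is node $m+i-1$. For $i\in[m]$ let $\mathrm{Anc}(i)=\{\lfloor (m+i-1)/2^h\rfloor: h=0,\dots,d\}$ and $\mathrm{Lop}(i)=\{k-1: k\in \mathrm{Anc}(i),\ k\text{ odd},\ k\ge 3\}$. Tree matrix $T\in\{0,1\}^{(2m-1)\times m}$: $T(k,i)=1$ iff $k\in\mathrm{Anc}(i)$. Roots matrix $R\in\{0,1\}^{m\times(2m-1)}$: for $j\in[m-1]$, $R(j,k)=1$ iff $k\in\mathrm{Lop}(j+1)$; row $m$ of $R$ is the indicator vector of $\{1\}$. Pairwise matrix $P\in\{-1,0,1\}^{m\times m}$: $(Pu)(1)=u(1)$ and $(Pu)(k)=u(k)-u(k-1)$ for $k\ge 2$. Sketch matrix $S\in\{0,1\}^{d\times m}$: $S(h,k)$ is the $h$-th bit (coefficient of $2^{h-1}$) of $k-1$. For a prime $p$ and an integer vector $y$, $i_p(y)$ is the vector with entries $y(k)^{p-1}\bmod p$, and $\mathrm{SPiRiT}_p(x)=\big(SP\cdot i_p\big((R\cdot i_p(Tx\bmod p))\bmod p\big)\big)\bmod p$. "Binary representation of $n$" means the vector whose $h$-th entry is the coefficient of $2^{h-1}$ in $n$. For a set $A$ of integers, $p$ is $A$-correct if for every $a\in A$: $a=0$ iff $a\equiv0\pmod p$. *)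

theory Defs
  imports "HOL-Analysis.Analysis"
begin

text \<open>Vectors are functions nat => int, 1-indexed; matrices are functions nat => nat => int.
  The parameter d determines m = 2^d.\<close>

definition matvec :: "(nat \<Rightarrow> nat \<Rightarrow> int) \<Rightarrow> nat \<Rightarrow> (nat \<Rightarrow> int) \<Rightarrow> nat \<Rightarrow> int" where
  "matvec A n x = (\<lambda>k. \<Sum>j=1..n. A k j * x j)"

definition Anc :: "nat \<Rightarrow> nat \<Rightarrow> nat set" where
  "Anc d i = {(2^d + i - 1) div 2^h | h. h \<le> d}"

definition Lop :: "nat \<Rightarrow> nat \<Rightarrow> nat set" where
  "Lop d i = {k - 1 | k. k \<in> Anc d i \<and> odd k \<and> k \<ge> 3}"

text \<open>Tree matrix, (2m-1) x m.\<close>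
definition treeM :: "nat \<Rightarrow> nat \<Rightarrow> nat \<Rightarrow> int" where
  "treeM d k i = (if k \<in> Anc d i then 1 else 0)"

text \<open>Roots matrix, m x (2m-1).\<close>
definition rootsM :: "nat \<Rightarrow> nat \<Rightarrow> nat \<Rightarrow> int" where
  "rootsM d j k = (if j < 2^d then (if k \<in> Lop d (j+1) then 1 else 0)
                   else (if k = 1 then 1 else 0))"

definition pairM :: "nat \<Rightarrow> nat \<Rightarrow> int" where
  "pairM k j = (if j = k then 1 else if k \<ge> 2 \<and> j = k - 1 then -1 else 0)"

definition sketchM :: "nat \<Rightarrow> nat \<Rightarrow> int" where
  "sketchM h k = int (((k - 1) div 2^(h - 1)) mod 2)"

definition ip :: "nat \<Rightarrow> (nat \<Rightarrow> int) \<Rightarrow> nat \<Rightarrow> int" where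
  "ip p y = (\<lambda>k. (y k) ^ (p - 1) mod int p)"

definition SPiRiT :: "nat \<Rightarrow> nat \<Rightarrow> (nat \<Rightarrow> int) \<Rightarrow> nat \<Rightarrow> int" where
  "SPiRiT d p x =
     (let m = 2^d;
          a = (\<lambda>k. matvec (treeM d) m x k mod int p);
          b = (\<lambda>j. matvec (rootsM d) (2*m - 1) (ip p a) j mod int p);
          c = matvec pairM m (ip p b)
      in (\<lambda>h. matvec sketchM m c h mod int p))"

definition binrep :: "nat \<Rightarrow> nat \<Rightarrow> int" where
  "binrep n h = int ((n div 2^(h - 1)) mod 2)"

definition A_correct :: "nat \<Rightarrow> int set \<Rightarrow> bool" where
  "A_correct p A = (\<forall>a\<in>A. a = 0 \<longleftrightarrow> a mod int p = 0)"

definition indvec :: "(nat \<Rightarrow> nat) \<Rightarrow> nat \<Rightarrow> nat \<Rightarrow> int" where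
  "indvec c l = (\<lambda>i. if c i = l then 1 else 0)"

definition istar :: "nat \<Rightarrow> (nat \<Rightarrow> nat) \<Rightarrow> nat \<Rightarrow> nat" where
  "istar m c l = (if \<exists>i\<in>{1..m}. c i = l then (LEAST i. i \<in> {1..m} \<and> c i = l) else 0)"

text \<open>f (defined on the assignment set Dom of the variables V) agrees mod p with
  a polynomial over Z_p (integer coefficients read mod p) of total degree at most D
  in the variables V.\<close>
definition poly_Zp_deg ::
  "nat \<Rightarrow> 'v set \<Rightarrow> nat \<Rightarrow> ('v \<Rightarrow> nat) set \<Rightarrow> (('v \<Rightarrow> nat) \<Rightarrow> int) \<Rightarrow> bool" where
  "poly_Zp_deg p V D Dom f =
     (\<exists>M :: ('v \<Rightarrow> nat) set. \<exists>coef :: ('v \<Rightarrow> nat) \<Rightarrow> int.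
        finite M \<and>
        (\<forall>e\<in>M. (\<forall>v. e v \<noteq> 0 \<longrightarrow> v \<in> V) \<and> (\<Sum>v\<in>V. e v) \<le> D) \<and>
        (\<forall>\<beta>\<in>Dom. f \<beta> mod int p = (\<Sum>e\<in>M. coef e * (\<Prod>v\<in>V. int (\<beta> v) ^ e v)) mod int p))"

definition decode :: "nat \<Rightarrow> (nat \<times> nat \<Rightarrow> nat) \<Rightarrow> nat \<Rightarrow> nat" where
  "decode t \<beta> j = (\<Sum>b=1..t. \<beta> (j, b) * 2^(b - 1))"

end

theory Submission
  imports Defs "HOL-Number_Theory.Residues"
begin


lemma poly_from_indexed:
  fixes I :: "'i set" and E :: "'i \<Rightarrow> 'v \<Rightarrow> nat" and cf :: "'i \<Rightarrow> int"
  assumes fin: "finite I"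
    and deg: "\<forall>i\<in>I. (\<forall>v. E i v \<noteq> 0 \<longrightarrow> v \<in> V) \<and> (\<Sum>v\<in>V. E i v) \<le> D"
    and val: "\<forall>\<beta>\<in>Dom. f \<beta> mod int p = (\<Sum>i\<in>I. cf i * (\<Prod>v\<in>V. int (\<beta> v) ^ E i v)) mod int p"
  shows "poly_Zp_deg p V D Dom f"
proof -
  define mon where "mon \<beta> e = (\<Prod>v\<in>V. int (\<beta> v) ^ e v)" for \<beta> e
  have eq: "(\<Sum>i\<in>I. cf i * mon \<beta> (E i)) = (\<Sum>e\<in>E`I. (\<Sum>i\<in>{i\<in>I. E i = e}. cf i) * mon \<beta> e)" for \<beta>
  proof -
    have "(\<Sum>i\<in>I. cf i * mon \<beta> (E i)) = (\<Sum>e\<in>E`I. \<Sum>i\<in>{i\<in>I. E i = e}. cf i * mon \<beta> (E i))"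
      by (rule sum.image_gen[OF fin])
    also have "\<dots> = (\<Sum>e\<in>E`I. (\<Sum>i\<in>{i\<in>I. E i = e}. cf i) * mon \<beta> e)"
      by (rule sum.cong) (auto simp: sum_distrib_right)
    finally show ?thesis .
  qed
  show ?thesis
    unfolding poly_Zp_deg_def
    apply (rule exI[of _ "E`I"], rule exI[of _ "\<lambda>e. \<Sum>i\<in>{i\<in>I. E i = e}. cf i"])
    using fin deg val eq unfolding mon_def by auto
qed

lemma poly_eq:
  assumes "\<forall>\<beta>\<in>Dom. f \<beta> mod int p = g \<beta> mod int p" "poly_Zp_deg p V D Dom g"
  shows "poly_Zp_deg p V D Dom f"
  using assms unfolding poly_Zp_deg_def by metis

lemma poly_mono:
  assumes "D \<le> D'" "poly_Zp_deg p V D Dom f"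
  shows "poly_Zp_deg p V D' Dom f"
  using assms unfolding poly_Zp_deg_def by (meson order_trans)

lemma poly_const: "poly_Zp_deg p V 0 Dom (\<lambda>\<beta>. c)"
  by (rule poly_from_indexed[where I="{()}" and E="\<lambda>_ _. 0" and cf="\<lambda>_. c"]) auto

lemma poly_var:
  assumes "finite V" "v \<in> V"
  shows "poly_Zp_deg p V 1 Dom (\<lambda>\<beta>. int (\<beta> v))"
proof (rule poly_from_indexed[where I="{()}" and E="\<lambda>_ w. if w = v then 1 else 0" and cf="\<lambda>_. 1"])
  have "(\<Prod>w\<in>V. int (\<beta> w) ^ (if w = v then 1 else 0)) = int (\<beta> v)" for \<beta>
  proof -
    have "(\<Prod>w\<in>V. int (\<beta> w) ^ (if w = v then 1 else 0)) = (\<Prod>w\<in>V. if w = v then int (\<beta> w) else 1)"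
      by (rule prod.cong) auto
    also have "\<dots> = int (\<beta> v)" using assms by (simp add: prod.delta)
    finally show ?thesis .
  qed
  then show "\<forall>\<beta>\<in>Dom. int (\<beta> v) mod int p = (\<Sum>i\<in>{()}. 1 * (\<Prod>w\<in>V. int (\<beta> w) ^ (if w = v then 1 else 0))) mod int p"
    by simp
  show "\<forall>i\<in>{()}. (\<forall>w. (if w = v then 1 else 0) \<noteq> (0::nat) \<longrightarrow> w \<in> V) \<and> (\<Sum>w\<in>V. if w = v then 1 else 0) \<le> (1::nat)"
    using assms by (simp add: sum.delta)
qed auto

lemma poly_add:
  assumes "poly_Zp_deg p V D Dom f" "poly_Zp_deg p V D Dom g"
  shows "poly_Zp_deg p V D Dom (\<lambda>\<beta>. f \<beta> + g \<beta>)"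
proof -
  obtain M1 c1 where 1: "finite M1" "\<forall>e\<in>M1. (\<forall>v. e v \<noteq> 0 \<longrightarrow> v \<in> V) \<and> (\<Sum>v\<in>V. e v) \<le> D"
    "\<forall>\<beta>\<in>Dom. f \<beta> mod int p = (\<Sum>e\<in>M1. c1 e * (\<Prod>v\<in>V. int (\<beta> v) ^ e v)) mod int p"
    using assms(1) unfolding poly_Zp_deg_def by blast
  obtain M2 c2 where 2: "finite M2" "\<forall>e\<in>M2. (\<forall>v. e v \<noteq> 0 \<longrightarrow> v \<in> V) \<and> (\<Sum>v\<in>V. e v) \<le> D"
    "\<forall>\<beta>\<in>Dom. g \<beta> mod int p = (\<Sum>e\<in>M2. c2 e * (\<Prod>v\<in>V. int (\<beta> v) ^ e v)) mod int p"
    using assms(2) unfolding poly_Zp_deg_def by blast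
  show ?thesis
  proof (rule poly_from_indexed[where I="M1 <+> M2" and E="case_sum id id" and cf="case_sum c1 c2"])
    show "finite (M1 <+> M2)" using 1 2 by simp
    show "\<forall>i\<in>M1 <+> M2. (\<forall>v. case_sum id id i v \<noteq> 0 \<longrightarrow> v \<in> V) \<and> (\<Sum>v\<in>V. case_sum id id i v) \<le> D"
      using 1 2 by auto
    show "\<forall>\<beta>\<in>Dom. (f \<beta> + g \<beta>) mod int p = (\<Sum>i\<in>M1 <+> M2. case_sum c1 c2 i * (\<Prod>v\<in>V. int (\<beta> v) ^ case_sum id id i v)) mod int p"
    proof
      fix \<beta> assume b: "\<beta> \<in> Dom"
      have "(f \<beta> + g \<beta>) mod int p = (f \<beta> mod int p + g \<beta> mod int p) mod int p" by (simp add: mod_add_eq)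
      also have "\<dots> = ((\<Sum>e\<in>M1. c1 e * (\<Prod>v\<in>V. int (\<beta> v) ^ e v)) mod int p + (\<Sum>e\<in>M2. c2 e * (\<Prod>v\<in>V. int (\<beta> v) ^ e v)) mod int p) mod int p"
        using 1(3) 2(3) b by simp
      also have "\<dots> = ((\<Sum>e\<in>M1. c1 e * (\<Prod>v\<in>V. int (\<beta> v) ^ e v)) + (\<Sum>e\<in>M2. c2 e * (\<Prod>v\<in>V. int (\<beta> v) ^ e v))) mod int p"
        by (simp add: mod_add_eq)
      also have "\<dots> = (\<Sum>i\<in>M1 <+> M2. case_sum c1 c2 i * (\<Prod>v\<in>V. int (\<beta> v) ^ case_sum id id i v)) mod int p"
        using 1(1) 2(1) by (simp add: sum.Plus comp_def)
      finally show "(f \<beta> + g \<beta>) mod int p = (\<Sum>i\<in>M1 <+> M2. case_sum c1 c2 i * (\<Prod>v\<in>V. int (\<beta> v) ^ case_sum id id i v)) mod int p" .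
    qed
  qed
qed

lemma poly_mult:
  assumes "poly_Zp_deg p V D1 Dom f" "poly_Zp_deg p V D2 Dom g"
  shows "poly_Zp_deg p V (D1 + D2) Dom (\<lambda>\<beta>. f \<beta> * g \<beta>)"
proof -
  obtain M1 c1 where 1: "finite M1" "\<forall>e\<in>M1. (\<forall>v. e v \<noteq> 0 \<longrightarrow> v \<in> V) \<and> (\<Sum>v\<in>V. e v) \<le> D1"
    "\<forall>\<beta>\<in>Dom. f \<beta> mod int p = (\<Sum>e\<in>M1. c1 e * (\<Prod>v\<in>V. int (\<beta> v) ^ e v)) mod int p"
    using assms(1) unfolding poly_Zp_deg_def by blast
  obtain M2 c2 where 2: "finite M2" "\<forall>e\<in>M2. (\<forall>v. e v \<noteq> 0 \<longrightarrow> v \<in> V) \<and> (\<Sum>v\<in>V. e v) \<le> D2"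
    "\<forall>\<beta>\<in>Dom. g \<beta> mod int p = (\<Sum>e\<in>M2. c2 e * (\<Prod>v\<in>V. int (\<beta> v) ^ e v)) mod int p"
    using assms(2) unfolding poly_Zp_deg_def by blast
  define E where "E = (\<lambda>(e1::'a \<Rightarrow> nat, e2::'a \<Rightarrow> nat) v. e1 v + e2 v)"
  define cf where "cf = (\<lambda>(e1, e2). c1 e1 * c2 e2)"
  show ?thesis
  proof (rule poly_from_indexed[where I="M1 \<times> M2" and E=E and cf=cf])
    show "finite (M1 \<times> M2)" using 1 2 by simp
    show "\<forall>i\<in>M1 \<times> M2. (\<forall>v. E i v \<noteq> 0 \<longrightarrow> v \<in> V) \<and> (\<Sum>v\<in>V. E i v) \<le> D1 + D2"
    proof
      fix i assume "i \<in> M1 \<times> M2"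
      then obtain e1 e2 where i: "i = (e1, e2)" "e1 \<in> M1" "e2 \<in> M2" by auto
      have "(\<Sum>v\<in>V. E i v) = (\<Sum>v\<in>V. e1 v) + (\<Sum>v\<in>V. e2 v)"
        unfolding i E_def by (simp add: sum.distrib)
      then show "(\<forall>v. E i v \<noteq> 0 \<longrightarrow> v \<in> V) \<and> (\<Sum>v\<in>V. E i v) \<le> D1 + D2"
        using 1(2) 2(2) i unfolding E_def by (fastforce intro: add_mono)
    qed
    show "\<forall>\<beta>\<in>Dom. (f \<beta> * g \<beta>) mod int p = (\<Sum>i\<in>M1 \<times> M2. cf i * (\<Prod>v\<in>V. int (\<beta> v) ^ E i v)) mod int p"
    proof
      fix \<beta> assume b: "\<beta> \<in> Dom"
      define mon where "mon e = (\<Prod>v\<in>V. int (\<beta> v) ^ e v)" for e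
      have mm: "mon e1 * mon e2 = mon (E (e1, e2))" for e1 e2
        unfolding mon_def E_def by (simp add: power_add prod.distrib)
      have "(f \<beta> * g \<beta>) mod int p = (f \<beta> mod int p * (g \<beta> mod int p)) mod int p" by (simp add: mod_mult_eq)
      also have "\<dots> = ((\<Sum>e\<in>M1. c1 e * mon e) mod int p * ((\<Sum>e\<in>M2. c2 e * mon e) mod int p)) mod int p"
        using 1(3) 2(3) b unfolding mon_def by simp
      also have "\<dots> = ((\<Sum>e\<in>M1. c1 e * mon e) * (\<Sum>e\<in>M2. c2 e * mon e)) mod int p"
        by (simp add: mod_mult_eq)
      also have "(\<Sum>e\<in>M1. c1 e * mon e) * (\<Sum>e\<in>M2. c2 e * mon e) = (\<Sum>i\<in>M1 \<times> M2. cf i * mon (E i))"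
        unfolding sum_product sum.cartesian_product
        by (rule sum.cong) (auto simp: cf_def mm[symmetric] mult_ac)
      finally show "(f \<beta> * g \<beta>) mod int p = (\<Sum>i\<in>M1 \<times> M2. cf i * (\<Prod>v\<in>V. int (\<beta> v) ^ E i v)) mod int p"
        unfolding mon_def .
    qed
  qed
qed

lemma poly_scale:
  assumes "poly_Zp_deg p V D Dom f"
  shows "poly_Zp_deg p V D Dom (\<lambda>\<beta>. c * f \<beta>)"
  using poly_mult[OF poly_const assms] by simp

lemma poly_diff:
  assumes "poly_Zp_deg p V D Dom f" "poly_Zp_deg p V D Dom g"
  shows "poly_Zp_deg p V D Dom (\<lambda>\<beta>. f \<beta> - g \<beta>)"
  using poly_add[OF assms(1) poly_scale[OF assms(2), of "-1"]] by simp

lemma poly_mod: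
  assumes "poly_Zp_deg p V D Dom f"
  shows "poly_Zp_deg p V D Dom (\<lambda>\<beta>. f \<beta> mod int p)"
  by (rule poly_eq[OF _ assms]) simp

lemma poly_sum:
  assumes "finite S" "\<forall>s\<in>S. poly_Zp_deg p V D Dom (F s)"
  shows "poly_Zp_deg p V D Dom (\<lambda>\<beta>. \<Sum>s\<in>S. F s \<beta>)"
  using assms
proof (induction S rule: finite_induct)
  case empty
  then show ?case using poly_mono[OF _ poly_const, of D] by simp
next
  case (insert x S)
  then show ?case using poly_add[of p V D Dom "F x"] by simp
qed

lemma poly_prod:
  assumes "finite S" "\<forall>s\<in>S. poly_Zp_deg p V D Dom (F s)"
  shows "poly_Zp_deg p V (card S * D) Dom (\<lambda>\<beta>. \<Prod>s\<in>S. F s \<beta>)"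
  using assms
proof (induction S rule: finite_induct)
  case empty
  then show ?case using poly_const by simp
next
  case (insert x S)
  then show ?case using poly_mult[of p V D Dom "F x"] by simp
qed

lemma poly_power:
  assumes "poly_Zp_deg p V D Dom f"
  shows "poly_Zp_deg p V (n * D) Dom (\<lambda>\<beta>. f \<beta> ^ n)"
proof (induction n)
  case 0
  then show ?case using poly_const by simp
next
  case (Suc n)
  then show ?case using poly_mult[OF assms Suc] by (simp add: add.commute)
qed

lemma decode_Suc: "decode (Suc t) \<beta> j = decode t \<beta> j + \<beta> (j, Suc t) * 2^t"
  unfolding decode_def by simp

lemma decode_lt: "(\<forall>b\<in>{1..t}. \<beta> (i,b) \<le> 1) \<Longrightarrow> decode t \<beta> i < 2^t"
proof (induction t)
  case 0 then show ?case by (simp add: decode_def)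
next
  case (Suc t)
  then have "decode t \<beta> i < 2^t" "\<beta> (i, Suc t) \<le> 1" by auto
  then have "decode t \<beta> i + \<beta> (i, Suc t) * 2^t < 2^t + 1 * 2^t"
    by (meson add_less_le_mono mult_le_mono1)
  then show ?case by (simp add: decode_Suc)
qed

lemma decode_eq:
  "(\<forall>b\<in>{1..t}. \<beta> (i,b) \<le> 1 \<and> \<beta> (j,b) \<le> 1) \<Longrightarrow>
   (decode t \<beta> i = decode t \<beta> j \<longleftrightarrow> (\<forall>b\<in>{1..t}. \<beta> (i,b) = \<beta> (j,b)))"
proof (induction t)
  case 0 then show ?case by (simp add: decode_def)
next
  case (Suc t)
  have lt: "decode t \<beta> i < 2^t" "decode t \<beta> j < 2^t"
    using Suc.prems by (auto intro: decode_lt)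
  have IH: "decode t \<beta> i = decode t \<beta> j \<longleftrightarrow> (\<forall>b\<in>{1..t}. \<beta> (i,b) = \<beta> (j,b))"
    using Suc by auto
  have "decode (Suc t) \<beta> i = decode (Suc t) \<beta> j \<longleftrightarrow>
        decode t \<beta> i = decode t \<beta> j \<and> \<beta> (i, Suc t) = \<beta> (j, Suc t)"
  proof
    assume e: "decode (Suc t) \<beta> i = decode (Suc t) \<beta> j"
    have "(decode t \<beta> i + \<beta> (i, Suc t) * 2^t) mod 2^t = (decode t \<beta> j + \<beta> (j, Suc t) * 2^t) mod 2^t"
      using e by (simp add: decode_Suc)
    then have 1: "decode t \<beta> i = decode t \<beta> j" using lt by simp
    have "(decode t \<beta> i + \<beta> (i, Suc t) * 2^t) div 2^t = (decode t \<beta> j + \<beta> (j, Suc t) * 2^t) div 2^t"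
      using e by (simp add: decode_Suc)
    then have "\<beta> (i, Suc t) = \<beta> (j, Suc t)" using lt by simp
    with 1 show "decode t \<beta> i = decode t \<beta> j \<and> \<beta> (i, Suc t) = \<beta> (j, Suc t)" by simp
  qed (simp add: decode_Suc)
  also have "\<dots> \<longleftrightarrow> (\<forall>b\<in>{1..Suc t}. \<beta> (i,b) = \<beta> (j,b))"
    using IH by (auto simp: le_Suc_eq)
  finally show ?case .
qed

lemma ind_prod:
  assumes "\<forall>b\<in>{1..t}. \<beta> (i,b) \<le> 1 \<and> \<beta> (j,b) \<le> 1"
  shows "(if decode t \<beta> i = decode t \<beta> j then 1 else 0) =
         (\<Prod>b\<in>{1..t}. 1 - (int (\<beta> (i,b)) - int (\<beta> (j,b)))^2)"
proof -
  have f: "1 - (int (\<beta> (i,b)) - int (\<beta> (j,b)))^2 = (if \<beta> (i,b) = \<beta> (j,b) then 1 else 0)"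
    if "b \<in> {1..t}" for b
  proof -
    have "\<beta> (i,b) \<le> 1" "\<beta> (j,b) \<le> 1" using assms that by auto
    then show ?thesis
      by (cases "\<beta> (i,b)"; cases "\<beta> (j,b)"; auto)
  qed
  show ?thesis
  proof (cases "\<forall>b\<in>{1..t}. \<beta> (i,b) = \<beta> (j,b)")
    case True
    then show ?thesis using decode_eq[OF assms] f by (simp add: prod.neutral)
  next
    case False
    then obtain b where b: "b \<in> {1..t}" "\<beta> (i,b) \<noteq> \<beta> (j,b)" by auto
    then have "(\<Prod>b\<in>{1..t}. 1 - (int (\<beta> (i,b)) - int (\<beta> (j,b)))^2) = 0"
      using f by (intro prod_zero) auto
    then show ?thesis using decode_eq[OF assms] False by simp
  qed
qed

lemma poly_part:
  assumes "p \<ge> 1"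
  shows "poly_Zp_deg p ({0..2^d} \<times> {1..t}) (2 * t * (p - 1)^2)
                {\<beta>. (\<forall>v\<in>{0..2^d} \<times> {1..t}. \<beta> v \<le> 1) \<and>
                     (\<forall>j\<in>{0..2^d}. decode t \<beta> j < r)}
                (\<lambda>\<beta>. SPiRiT d p (indvec (decode t \<beta>) (decode t \<beta> 0)) h)"
proof -
  define m :: nat where "m = 2^d"
  define V where "V = {0..m} \<times> {1..t}"
  define Dom where "Dom = {\<beta>. (\<forall>v\<in>V. \<beta> v \<le> 1) \<and> (\<forall>j\<in>{0..m}. decode t \<beta> j < r)}"
  define X where "X \<beta> = indvec (decode t \<beta>) (decode t \<beta> 0)" for \<beta>
  define Aa where "Aa \<beta> = (\<lambda>k. matvec (treeM d) m (X \<beta>) k mod int p)" for \<beta>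
  define Bb where "Bb \<beta> = (\<lambda>j. matvec (rootsM d) (2*m - 1) (ip p (Aa \<beta>)) j mod int p)" for \<beta>
  define Cc where "Cc \<beta> = matvec pairM m (ip p (Bb \<beta>))" for \<beta>
  have S: "SPiRiT d p (X \<beta>) h = matvec sketchM m (Cc \<beta>) h mod int p" for \<beta>
    unfolding SPiRiT_def Let_def Cc_def Bb_def Aa_def m_def by simp
  have finV: "finite V" unfolding V_def by simp
  have hX: "poly_Zp_deg p V (2*t) Dom (\<lambda>\<beta>. X \<beta> i)" if i: "i \<in> {1..m}" for i
  proof (rule poly_eq)
    show "\<forall>\<beta>\<in>Dom. X \<beta> i mod int p = (\<Prod>b\<in>{1..t}. 1 - (int (\<beta> (i,b)) - int (\<beta> (0,b)))^2) mod int p"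
    proof
      fix \<beta> assume "\<beta> \<in> Dom"
      then have "\<forall>b\<in>{1..t}. \<beta> (i,b) \<le> 1 \<and> \<beta> (0,b) \<le> 1" using i unfolding Dom_def V_def by auto
      from ind_prod[OF this] show "X \<beta> i mod int p = (\<Prod>b\<in>{1..t}. 1 - (int (\<beta> (i,b)) - int (\<beta> (0,b)))^2) mod int p"
        unfolding X_def indvec_def by simp
    qed
    have "poly_Zp_deg p V 2 Dom (\<lambda>\<beta>. 1 - (int (\<beta> (i,b)) - int (\<beta> (0,b)))^2)" if b: "b \<in> {1..t}" for b
    proof -
      have v: "poly_Zp_deg p V 1 Dom (\<lambda>\<beta>. int (\<beta> (i,b)) - int (\<beta> (0,b)))"
        by (rule poly_diff; rule poly_var[OF finV]) (use i b in \<open>auto simp: V_def\<close>)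
      have vv: "poly_Zp_deg p V 2 Dom (\<lambda>\<beta>. (int (\<beta> (i,b)) - int (\<beta> (0,b))) * (int (\<beta> (i,b)) - int (\<beta> (0,b))))"
        using poly_mult[OF v v] by (simp add: numeral_2_eq_2)
      have "poly_Zp_deg p V 2 Dom (\<lambda>\<beta>. 1 - (int (\<beta> (i,b)) - int (\<beta> (0,b))) * (int (\<beta> (i,b)) - int (\<beta> (0,b))))"
        by (rule poly_diff[OF poly_mono[OF _ poly_const] vv]) simp
      then show ?thesis by (simp add: power2_eq_square)
    qed
    from poly_prod[of "{1..t}", OF _ ballI[OF this]]
    show "poly_Zp_deg p V (2 * t) Dom (\<lambda>\<beta>. \<Prod>b\<in>{1..t}. 1 - (int (\<beta> (i,b)) - int (\<beta> (0,b)))^2)"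
      by (simp add: mult.commute)
  qed
  have hA: "poly_Zp_deg p V (2*t) Dom (\<lambda>\<beta>. Aa \<beta> k)" for k
    unfolding Aa_def matvec_def
    by (intro poly_mod poly_sum ballI poly_scale hX) auto
  have hiA: "poly_Zp_deg p V ((p-1)*(2*t)) Dom (\<lambda>\<beta>. ip p (Aa \<beta>) k)" for k
    unfolding ip_def by (intro poly_mod poly_power hA)
  have hB: "poly_Zp_deg p V ((p-1)*(2*t)) Dom (\<lambda>\<beta>. Bb \<beta> j)" for j
    unfolding Bb_def matvec_def
    by (intro poly_mod poly_sum ballI poly_scale hiA) auto
  have hiB: "poly_Zp_deg p V ((p-1)*((p-1)*(2*t))) Dom (\<lambda>\<beta>. ip p (Bb \<beta>) j)" for j
    unfolding ip_def by (intro poly_mod poly_power hB)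
  have hC: "poly_Zp_deg p V ((p-1)*((p-1)*(2*t))) Dom (\<lambda>\<beta>. Cc \<beta> k)" for k
    unfolding Cc_def matvec_def
    by (intro poly_sum ballI poly_scale hiB) auto
  have "poly_Zp_deg p V ((p-1)*((p-1)*(2*t))) Dom (\<lambda>\<beta>. SPiRiT d p (X \<beta>) h)"
    unfolding S matvec_def
    by (intro poly_mod poly_sum ballI poly_scale hC) auto
  moreover have "(p-1)*((p-1)*(2*t)) = 2 * t * (p - 1)^2" by (simp add: power2_eq_square mult_ac)
  ultimately have "poly_Zp_deg p V (2 * t * (p - 1)^2) Dom (\<lambda>\<beta>. SPiRiT d p (X \<beta>) h)" by metis
  then show ?thesis unfolding V_def Dom_def X_def m_def .
qed



lemma ip01:
  assumes "prime p" "0 \<le> y" "y < int p"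
  shows "y^(p-1) mod int p = (if y = 0 then 0 else 1)"
proof (cases "y = 0")
  case True
  have "p \<ge> 2" using assms(1) prime_ge_2_nat by blast
  then show ?thesis using True by (simp add: power_0_left)
next
  case False
  obtain n where n: "y = int n" using assms(2) nonneg_eq_int by blast
  have "n < p" "n \<noteq> 0" using n assms False by auto
  then have "\<not> p dvd n" by (meson dvd_imp_le neq0_conv not_le)
  from fermat_theorem[OF assms(1) this] have "n^(p-1) mod p = 1 mod p" by (simp add: cong_def)
  also have "1 mod p = 1" using assms(1) prime_gt_1_nat by auto
  finally have "int (n^(p-1) mod p) = 1" by simp
  then show ?thesis using n False by (simp add: of_nat_mod)
qed

lemma level:
  fixes i d h :: nat
  assumes "i \<in> {1..2^d}" "h \<le> d"
  shows "2^(d-h) \<le> (2^d+i-1) div 2^h \<and> (2^d+i-1) div 2^h < 2 * 2^(d-h)"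
proof
  have e: "(2::nat)^d = 2^(d-h) * 2^h" using assms(2) by (simp add: power_add[symmetric])
  have "2^(d-h) = (2^(d-h) * 2^h) div (2::nat)^h" by simp
  also have "\<dots> \<le> (2^d+i-1) div 2^h" using e assms(1) by (intro div_le_mono) auto
  finally show "2^(d-h) \<le> (2^d+i-1) div 2^h" .
  have "2^d+i-1 < (2 * 2^(d-h)) * 2^h" using e assms(1) by auto
  then show "(2^d+i-1) div 2^h < 2 * 2^(d-h)" by (simp add: less_mult_imp_div_less)
qed

lemma level_unique:
  assumes "(2::nat)^a \<le> x" "x < 2 * 2^a" "2^b \<le> x" "x < 2 * 2^b"
  shows "a = b"
proof (rule ccontr)
  assume "a \<noteq> b"
  then consider "Suc a \<le> b" | "Suc b \<le> a" by linarith
  then show False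
  proof cases
    case 1
    then have "(2::nat)^Suc a \<le> 2^b" by (intro power_increasing) auto
    then show False using assms by simp
  next
    case 2
    then have "(2::nat)^Suc b \<le> 2^a" by (intro power_increasing) auto
    then show False using assms by simp
  qed
qed

lemma root_anc: assumes "i \<in> {1..2^d}" shows "(2^d+i-1) div 2^d = (1::nat)"
  using level[OF assms, of d] by simp

lemma T1:
  assumes "k \<in> Lop d (j+1)" "j+1 \<in> {1..2^d}" "i \<in> {1..2^d}" "k \<in> Anc d i"
  shows "i \<le> j"
proof -
  obtain k' h where k': "k = k' - 1" "k' = (2^d + j) div 2^h" "h \<le> d" "odd k'" "k' \<ge> 3"
    using assms(1) unfolding Lop_def Anc_def by auto
  obtain g where g: "k = (2^d + i - 1) div 2^g" "g \<le> d" using assms(4) unfolding Anc_def by auto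
  have lv: "2^(d-h) \<le> k'" "k' < 2 * 2^(d-h)" using level[OF assms(2) k'(3)] k'(2) by auto
  have "h \<noteq> d" using root_anc[OF assms(2)] k' by auto
  then have "even ((2::nat)^(d-h))" using k'(3) by simp
  then have "k' \<noteq> 2^(d-h)" using k'(4) by auto
  then have lk: "2^(d-h) \<le> k" "k < 2 * 2^(d-h)" using lv k'(1) by auto
  have "d - g = d - h" using level[OF assms(3) g(2)] g(1) lk by (intro level_unique) auto
  then have "g = h" using g(2) k'(3) by simp
  then have "(2^d + i - 1) div 2^h < (2^d + j) div 2^h" using g k' by auto
  then have "2^d + i - 1 < 2^d + j" by (meson div_le_mono not_le)
  then show ?thesis by simp
qed

lemma T2:
  assumes "1 \<le> s" "s \<le> j" "j < 2^d"
  shows "\<exists>k. k \<in> Lop d (j+1) \<and> k \<in> Anc d s \<and> k \<in> {1..2*2^d-1}"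
proof -
  define P where "P h \<longleftrightarrow> (2^d+s-1) div 2^h = ((2^d+j) div 2^h :: nat)" for h
  have sm: "s \<in> {1..2^d}" "j+1 \<in> {1..2^d}" using assms by auto
  have Pd: "P d" unfolding P_def using root_anc[OF sm(1)] root_anc[OF sm(2)] by simp
  define g where "g = (LEAST h. P h)"
  have Pg: "P g" unfolding g_def using Pd by (rule LeastI)
  have gd: "g \<le> d" unfolding g_def using Pd by (rule Least_le)
  have "\<not> P 0" unfolding P_def using assms by simp
  have g0: "g \<noteq> 0"
  proof
    assume "g = 0" with Pg \<open>\<not> P 0\<close> show False by simp
  qed
  define h where "h = g - 1"
  have hg: "g = Suc h" using g0 h_def by simp
  have nPh: "\<not> P h" unfolding g_def h_def using g0 g_def not_less_Least by (metis diff_less less_one neq0_conv)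
  define a where "a = (2^d+s-1) div (2::nat)^h"
  define a' where "a' = (2^d+j) div (2::nat)^h"
  have "a \<noteq> a'" using nPh unfolding P_def a_def a'_def .
  moreover have "a \<le> a'" unfolding a_def a'_def using assms by (intro div_le_mono) auto
  moreover have "a div 2 = a' div 2" using Pg unfolding P_def a_def a'_def hg by (metis div_mult2_eq power_Suc2)

  ultimately have aa: "a' = a + 1" "even a"
  proof -
    assume ne: "a \<noteq> a'" and le: "a \<le> a'" and dv: "a div 2 = a' div 2"
    have e1: "a = 2 * (a div 2) + a mod 2" "a' = 2 * (a' div 2) + a' mod 2" by simp_all
    have "a mod 2 < 2" "a' mod 2 < 2" by simp_all
    then have "a mod 2 = 0 \<and> a' mod 2 = 1" using e1 ne le dv by linarith
    then show "a' = a + 1" "even a" using e1 dv by (auto simp: even_iff_mod_2_eq_zero)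
  qed
  have hd: "h < d" using gd hg by simp
  have lv: "2^(d-h) \<le> a'" using level[OF sm(2), of h] hd unfolding a'_def by simp
  have "(2::nat)^1 \<le> 2^(d-h)" by (rule power_increasing) (use hd in auto)
  then have "(2::nat) \<le> 2^(d-h)" by simp
  then have a3: "a' \<ge> 3" using lv aa by presburger
  have "a' \<in> Anc d (j+1)" unfolding Anc_def a'_def using hd by auto
  then have L: "a \<in> Lop d (j+1)" unfolding Lop_def using aa a3 by force
  have A: "a \<in> Anc d s" unfolding Anc_def a_def using hd by auto
  have "a \<ge> 2^(d-h)" using level[OF sm(1), of h] hd unfolding a_def by simp
  then have "a \<ge> 1" by (meson le_trans one_le_power one_le_numeral)
  moreover have "a \<le> 2^d+s-1" unfolding a_def by (rule div_le_dividend)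
  ultimately have "a \<in> {1..2*2^d-1}" using sm by auto
  then show ?thesis using L A by blast
qed

lemma T3:
  assumes "i \<in> {1..2^d}"
  shows "finite (Lop d i) \<and> card (Lop d i) \<le> d"
proof -
  have sub: "{k\<in>Anc d i. odd k \<and> k \<ge> 3} \<subseteq> (\<lambda>h. (2^d+i-1) div 2^h) ` {0..<d}"
  proof
    fix k assume "k \<in> {k\<in>Anc d i. odd k \<and> k \<ge> 3}"
    then obtain h where h: "k = (2^d+i-1) div 2^h" "h \<le> d" "k \<ge> 3" unfolding Anc_def by auto
    have "h \<noteq> d" using h root_anc[OF assms] by auto
    then show "k \<in> (\<lambda>h. (2^d+i-1) div 2^h) ` {0..<d}" using h by auto
  qed
  have "Lop d i = (\<lambda>k. k - 1) ` {k\<in>Anc d i. odd k \<and> k \<ge> 3}" unfolding Lop_def by auto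
  moreover have "finite {k\<in>Anc d i. odd k \<and> k \<ge> 3}" using sub finite_surj by blast
  moreover have "card {k\<in>Anc d i. odd k \<and> k \<ge> 3} \<le> d"
    using card_mono[OF _ sub] card_image_le[of "{0..<d}" "\<lambda>h. (2^d+i-1) div 2^h"] by simp
  ultimately show ?thesis using card_image_le[of "{k\<in>Anc d i. odd k \<and> k \<ge> 3}" "\<lambda>k. k - 1"] by auto
qed

lemma T4: "i \<in> {1..2^d} \<Longrightarrow> 1 \<in> Anc d i"
  unfolding Anc_def using root_anc by force



lemma sum_ind_card:
  "finite K \<Longrightarrow> (\<Sum>k\<in>K. (if k \<in> L then 1 else 0) :: int) = int (card (K \<inter> L))"
  by (simp add: sum.If_cases)

lemma correct_part:
  fixes d p :: nat and c :: "nat \<Rightarrow> nat"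
  assumes p: "prime p" and pd: "p > d"
  shows "(istar (2^d) c l = 0 \<longrightarrow> (\<forall>h\<in>{1..d}. SPiRiT d p (indvec c l) h = 0)) \<and>
         (istar (2^d) c l \<ge> 1 \<longrightarrow>
            A_correct p {matvec (treeM d) (2^d) (indvec c l) k | k. k \<in> Anc d (istar (2^d) c l)} \<longrightarrow>
            (\<forall>h\<in>{1..d}. SPiRiT d p (indvec c l) h = binrep (istar (2^d) c l - 1) h))"
proof -
  define m :: nat where "m = 2^d"
  have m1: "m \<ge> 1" unfolding m_def by simp
  have p2: "p \<ge> 2" using p prime_ge_2_nat by blast
  define x where "x = indvec c l"
  define n where "n k = matvec (treeM d) m x k" for k
  define Aa where "Aa = (\<lambda>k. n k mod int p)"
  define iA where "iA = ip p Aa"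
  define Bb where "Bb = (\<lambda>j. matvec (rootsM d) (2*m - 1) iA j mod int p)"
  define iB where "iB = ip p Bb"
  define Cc where "Cc = matvec pairM m iB"
  have S: "SPiRiT d p x h = (\<Sum>k=1..m. sketchM h k * Cc k) mod int p" for h
    unfolding SPiRiT_def Let_def Cc_def iB_def Bb_def iA_def Aa_def n_def m_def matvec_def[of sketchM]
    by simp
  have ipz: "ip p f k = (if f k mod int p = 0 then 0 else 1)" if "0 \<le> f k" "f k < int p" for f k
    unfolding ip_def using ip01[OF p that] that by simp
  have Aa_rng: "0 \<le> Aa k \<and> Aa k < int p" for k unfolding Aa_def using p2 by simp
  have iA_eq: "iA k = (if Aa k = 0 then 0 else 1)" for k
    unfolding iA_def using ipz[of Aa k] Aa_rng[of k] by simp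
  have n_nonneg: "0 \<le> n k" for k unfolding n_def matvec_def
    by (rule sum_nonneg) (auto simp: treeM_def x_def indvec_def)
  have n_zero: "n k = 0" if "\<forall>i\<in>{1..m}. k \<in> Anc d i \<longrightarrow> c i \<noteq> l" for k
    unfolding n_def matvec_def using that by (intro sum.neutral) (auto simp: treeM_def x_def indvec_def)
  have Bb_rng: "0 \<le> Bb j \<and> Bb j < int p" for j unfolding Bb_def using p2 by simp
  have iB_eq: "iB j = (if Bb j = 0 then 0 else 1)" for j
    unfolding iB_def using ipz[of Bb j] Bb_rng[of j] by simp
  show ?thesis
  proof (intro conjI impI)
    assume "istar (2^d) c l = 0"
    then have none: "\<forall>i\<in>{1..m}. c i \<noteq> l"
    proof (intro ballI notI)
      fix i assume z: "istar (2^d) c l = 0" and i: "i \<in> {1..m}" "c i = l"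
      then have "\<exists>i\<in>{1..m}. c i = l" by blast
      then have "istar (2^d) c l = (LEAST i. i \<in> {1..m} \<and> c i = l)" unfolding istar_def m_def by simp
      moreover have "(LEAST i. i \<in> {1..m} \<and> c i = l) \<in> {1..m}"
        using i by (metis (mono_tags, lifting) LeastI)
      ultimately show False using z by simp
    qed
    have "Aa k = 0" for k unfolding Aa_def using n_zero none by simp
    then have "iA k = 0" for k using iA_eq by simp
    then have "Bb j = 0" for j unfolding Bb_def matvec_def by simp
    then have "iB j = 0" for j using iB_eq by simp
    then have "Cc k = 0" for k unfolding Cc_def matvec_def by simp
    then show "\<forall>h\<in>{1..d}. SPiRiT d p (indvec c l) h = 0" using S x_def by simp
  next
    assume s1: "istar (2^d) c l \<ge> 1"
      and AC: "A_correct p {matvec (treeM d) (2^d) (indvec c l) k | k. k \<in> Anc d (istar (2^d) c l)}"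
    define s where "s = istar m c l"
    have ex: "\<exists>i\<in>{1..m}. c i = l"
    proof (rule ccontr)
      assume "\<not> (\<exists>i\<in>{1..m}. c i = l)"
      then have "istar (2^d) c l = 0" unfolding istar_def m_def by simp
      then show False using s1 by simp
    qed
    then have s_def': "s = (LEAST i. i \<in> {1..m} \<and> c i = l)" unfolding s_def istar_def by simp
    have sP: "s \<in> {1..m} \<and> c s = l" unfolding s_def' using ex by (metis (mono_tags, lifting) LeastI)
    have s_min: "c i \<noteq> l" if "i \<in> {1..m}" "i < s" for i
      using not_less_Least[of i "\<lambda>i. i \<in> {1..m} \<and> c i = l"] that unfolding s_def' by blast
    have sm: "s \<in> {1..2^d}" using sP m_def by simp
    have AC': "n k \<noteq> 0 \<Longrightarrow> n k mod int p \<noteq> 0" if "k \<in> Anc d s" for k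
    proof -
      have e1: "n k = matvec (treeM d) (2^d) (indvec c l) k" unfolding n_def x_def m_def ..
      have e2: "k \<in> Anc d (istar (2^d) c l)" using that unfolding s_def m_def .
      have mem: "n k \<in> {matvec (treeM d) (2^d) (indvec c l) k | k. k \<in> Anc d (istar (2^d) c l)}"
        using e1 e2 by auto
      show "n k \<noteq> 0 \<Longrightarrow> n k mod int p \<noteq> 0" using bspec[OF AC[unfolded A_correct_def] mem] by simp
    qed
    have n_pos: "n k \<noteq> 0" if "k \<in> Anc d s" for k
    proof -
      have "treeM d k s * x s \<le> n k" unfolding n_def matvec_def
        by (rule member_le_sum) (use sP in \<open>auto simp: treeM_def x_def indvec_def\<close>)
      then show ?thesis using that sP by (simp add: treeM_def x_def indvec_def)
    qed
    have iA_anc: "iA k = 1" if "k \<in> Anc d s" for k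
      using AC'[OF that n_pos[OF that]] iA_eq unfolding Aa_def by simp
    have iB_lt: "iB j = 0" if "j \<in> {1..m}" "j < s" for j
    proof -
      have "iA k = 0" if "k \<in> Lop d (j+1)" for k
      proof -
        have "n k = 0"
        proof (rule n_zero, intro ballI impI)
          fix i assume i: "i \<in> {1..m}" "k \<in> Anc d i"
          have "j+1 \<in> {1..2^d}" using \<open>j < s\<close> sP m_def by auto
          then have "i \<le> j" using T1[OF \<open>k \<in> Lop d (j+1)\<close>] i m_def by auto
          then show "c i \<noteq> l" using s_min i \<open>j < s\<close> by auto
        qed
        then show ?thesis using iA_eq Aa_def by simp
      qed
      moreover have "j < 2^d" using that sP m_def by auto
      ultimately have "\<forall>k\<in>{1..2*m-1}. rootsM d j k * iA k = 0" by (auto simp: rootsM_def)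
      then have "(\<Sum>k=1..2*m-1. rootsM d j k * iA k) = 0" by (intro sum.neutral) blast
      then have "Bb j = 0" unfolding Bb_def matvec_def by simp
      then show ?thesis using iB_eq by simp
    qed
    have iB_ge: "iB j = 1" if jr: "j \<in> {1..m}" "s \<le> j" for j
    proof (cases "j = m")
      case True
      have "Bb j = (\<Sum>k=1..2*m-1. (if k = 1 then iA k else 0)) mod int p"
        unfolding Bb_def matvec_def using True m_def by (intro arg_cong[where f="\<lambda>z. z mod int p"] sum.cong) (auto simp: rootsM_def)
      also have "\<dots> = 1" using iA_anc[OF T4[OF sm]] m1 p2 by (simp add: sum.delta)
      finally show ?thesis using iB_eq by simp
    next
      case False
      then have jm: "j < 2^d" using jr m_def by auto
      define SS where "SS = (\<Sum>k=1..2*m-1. rootsM d j k * iA k)"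
      have SS': "SS = (\<Sum>k=1..2*m-1. (if k \<in> Lop d (j+1) then iA k else 0))"
        unfolding SS_def using jm by (intro sum.cong) (auto simp: rootsM_def)
      have iA01: "0 \<le> iA k \<and> iA k \<le> 1" for k using iA_eq[of k] by simp
      obtain k0 where k0: "k0 \<in> Lop d (j+1)" "k0 \<in> Anc d s" "k0 \<in> {1..2*2^d-1}"
        using T2[of s j d] sP jr jm by auto
      have "1 \<le> SS" unfolding SS'
      proof -
        have "(if k0 \<in> Lop d (j+1) then iA k0 else 0) \<le> (\<Sum>k=1..2*m-1. (if k \<in> Lop d (j+1) then iA k else 0))"
          by (rule member_le_sum) (use k0 m_def iA01 in auto)
        then show "1 \<le> (\<Sum>k=1..2*m-1. (if k \<in> Lop d (j+1) then iA k else 0))"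
          using k0 iA_anc by simp
      qed
      moreover have "SS \<le> int d"
      proof -
        have "SS \<le> (\<Sum>k=1..2*m-1. (if k \<in> Lop d (j+1) then 1 else 0))" unfolding SS'
          by (rule sum_mono) (use iA01 in auto)
        also have "\<dots> = int (card ({1..2*m-1} \<inter> Lop d (j+1)))" by (rule sum_ind_card) simp
        also have "\<dots> \<le> int (card (Lop d (j+1)))"
          using T3[of "j+1" d] jm by (simp add: card_mono)
        also have "\<dots> \<le> int d" using T3[of "j+1" d] jm by simp
        finally show ?thesis .
      qed
      ultimately have "Bb j = SS" "SS \<noteq> 0" unfolding Bb_def matvec_def SS_def[symmetric]
        using pd by auto
      then show ?thesis using iB_eq by simp
    qed
    have iB_all: "iB j = (if s \<le> j then 1 else 0)" if "j \<in> {1..m}" for j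
      using iB_lt iB_ge that by (cases "s \<le> j") auto
    have Cc_eq: "Cc k = (if k = s then 1 else 0)" if k: "k \<in> {1..m}" for k
    proof -
      have "Cc k = (\<Sum>j=1..m. (if j = k then iB k else 0) + (if 2 \<le> k \<and> j = k - 1 then - iB (k-1) else 0))"
        unfolding Cc_def matvec_def by (intro sum.cong) (auto simp: pairM_def)
      also have "\<dots> = iB k + (if 2 \<le> k then - iB (k-1) else 0)"
        using k by (auto simp add: sum.distrib sum.delta)
      also have "\<dots> = (if k = s then 1 else 0)"
      proof -
        have a: "iB k = (if s \<le> k then 1 else 0)" using iB_all k by simp
        have b: "iB (k-1) = (if s \<le> k-1 then 1 else 0)" if k2: "2 \<le> k"
        proof -
          have "k-1 \<in> {1..m}" using k k2 by auto
          then show ?thesis by (rule iB_all)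
        qed
        show ?thesis
        proof (cases "2 \<le> k")
          case True then show ?thesis using a b by auto
        next
          case False then have "k = 1" using k by simp
          then show ?thesis using a sP by auto
        qed
      qed
      finally show ?thesis .
    qed
    have "(\<Sum>k=1..m. sketchM h k * Cc k) = (\<Sum>k=1..m. if k = s then sketchM h s else 0)" for h
      by (intro sum.cong) (auto simp: Cc_eq)
    also have "\<dots> h = sketchM h s" for h using sP by (simp add: sum.delta)
    finally have "SPiRiT d p x h = sketchM h s mod int p" for h using S by simp
    moreover have "sketchM h s mod int p = binrep (s - 1) h" for h
    proof -
      have "0 \<le> sketchM h s" "sketchM h s < int p" using p2 unfolding sketchM_def by auto
      then show ?thesis unfolding sketchM_def binrep_def by simp
    qed
    ultimately show "\<forall>h\<in>{1..d}. SPiRiT d p (indvec c l) h = binrep (istar (2^d) c l - 1) h"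
      using x_def s_def m_def by simp
  qed
qed


theorem lemma3:
  fixes d r p :: nat
  assumes "d \<ge> 1" and "r \<ge> 2" and "prime p" and "p > d"
  defines "m \<equiv> 2 ^ d"
      and "t \<equiv> nat \<lceil>log 2 (real r)\<rceil>"
  shows "(\<forall>(c :: nat \<Rightarrow> nat) l. (\<forall>i\<in>{1..m}. c i < r) \<longrightarrow> l < r \<longrightarrow>
            (istar m c l = 0 \<longrightarrow> (\<forall>h\<in>{1..d}. SPiRiT d p (indvec c l) h = 0)) \<and>
            (istar m c l \<ge> 1 \<longrightarrow>
               A_correct p {matvec (treeM d) m (indvec c l) k | k. k \<in> Anc d (istar m c l)} \<longrightarrow>
               (\<forall>h\<in>{1..d}. SPiRiT d p (indvec c l) h = binrep (istar m c l - 1) h)))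
         \<and> (\<forall>h\<in>{1..d}.
              poly_Zp_deg p ({0..m} \<times> {1..t}) (2 * t * (p - 1)^2)
                {\<beta>. (\<forall>v\<in>{0..m} \<times> {1..t}. \<beta> v \<le> 1) \<and>
                     (\<forall>j\<in>{0..m}. decode t \<beta> j < r)}
                (\<lambda>\<beta>. SPiRiT d p (indvec (decode t \<beta>) (decode t \<beta> 0)) h))"
proof (intro conjI allI impI ballI)
  fix c :: "nat \<Rightarrow> nat" and l :: nat
  show "istar m c l = 0 \<Longrightarrow> SPiRiT d p (indvec c l) h = 0" if "h \<in> {1..d}" for h
    using correct_part[OF assms(3) assms(4), of c l] that unfolding m_def by blast
  show "SPiRiT d p (indvec c l) h = binrep (istar m c l - 1) h"
    if "1 \<le> istar m c l"
       "A_correct p {matvec (treeM d) m (indvec c l) k | k. k \<in> Anc d (istar m c l)}"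
       "h \<in> {1..d}" for h
    using correct_part[OF assms(3) assms(4), of c l] that unfolding m_def by blast
next
  fix h assume "h \<in> {1..d}"
  have "p \<ge> 1" using assms(3) prime_ge_1_nat by blast
  from poly_part[OF this, of d t r h]
  show "poly_Zp_deg p ({0..m} \<times> {1..t}) (2 * t * (p - 1)^2)
                {\<beta>. (\<forall>v\<in>{0..m} \<times> {1..t}. \<beta> v \<le> 1) \<and>
                     (\<forall>j\<in>{0..m}. decode t \<beta> j < r)}
                (\<lambda>\<beta>. SPiRiT d p (indvec (decode t \<beta>) (decode t \<beta> 0)) h)"
    unfolding m_def .
qed

end
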